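(* Let $m\ge 2$, $d\ge1$ be integers, $n=md$, $a,c>0$, $q=\frac{ad}{2c}+1$. Let $\Pi$ be the $n\times\binom m2$ matrix whose columns are the vectors $\sqrt{a/m}\,(e_{1+(i-1)d}-e_{1+(j-1)d})$, $1\le i<j\le m$; let $\Pi_R$ be the $m\times\binom m2$ submatrix of $\Pi$ formed by its rows $1+(k-1)d$, $k=1,\dots,m$; let $G_R$ be the $m\times m$ matrix with $(G_R)_{kl}=-\frac{d}{2cm}|k-l|(m-|k-l|)$; let $M_R=(G_R^{-1}+\Pi_R\Pi_R^\top)^{-1}$; and let $F=\Pi\Pi^\top-\Pi\Pi_R^\top M_R\Pi_R\Pi^\top$ ($n\times n$). Then for all $r,s\in\{1,\dots,m\}$, $F_{(r-1)d+1,\,(s-1)d+1}=f_{((s-r)\bmod m)+1}$, all other entries of $F$ are $0$, and $$f_i=a\,\delta_{i1}-\frac{a^2d}{2c}\,\frac{U_{i-2}(q)+U_{m-i}(q)}{T_m(q)-1},\qquad i=1,\dots,m.$$ That is, $F$ is the block Toeplitz (block circulant) matrix with block rows $(F_1,F_2,\dots,F_m)$, $(F_m,F_1,\dots,F_{m-1})$, …, where each $d\times d$ block $F_i$ has $(F_i)_{11}=f_i$ and all other entries zero.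
   Context: $e_j$ denotes the $j$-th standard basis vector of $\mathbb R^n$; $\delta_{i1}$ is the Kronecker delta. $T_k,U_k$ are the Chebyshev polynomials of the first and second kind ($T_0=1,T_1=x,U_0=1,U_1=2x$, recurrence $p_{k+1}=2xp_k-p_{k-1}$), with $U_{-1}=0$. *)

theory Defs
  imports Complex_Main "Jordan_Normal_Form.Gauss_Jordan_Elimination"
begin

fun cheb_T :: "nat \<Rightarrow> real \<Rightarrow> real" where
  "cheb_T 0 x = 1"
| "cheb_T (Suc 0) x = x"
| "cheb_T (Suc (Suc k)) x = 2 * x * cheb_T (Suc k) x - cheb_T k x"

fun cheb_U :: "nat \<Rightarrow> real \<Rightarrow> real" where
  "cheb_U 0 x = 1"
| "cheb_U (Suc 0) x = 2 * x"
| "cheb_U (Suc (Suc k)) x = 2 * x * cheb_U (Suc k) x - cheb_U k x"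

text \<open>U with integer index, with the convention U_{-1} = 0 (only index -1 is ever negative here).\<close>
definition cheb_U_int :: "int \<Rightarrow> real \<Rightarrow> real" where
  "cheb_U_int k x = (if k < 0 then 0 else cheb_U (nat k) x)"

text \<open>Enumeration of the pairs (i,j), 0 \<le> i < j < m (0-based version of 1 \<le> i < j \<le> m),
  giving the column order of Pi.\<close>
definition pairs_list :: "nat \<Rightarrow> (nat \<times> nat) list" where
  "pairs_list m = [(i, j). i \<leftarrow> [0..<m], j \<leftarrow> [Suc i..<m]]"

definition Pi_mat :: "nat \<Rightarrow> nat \<Rightarrow> real \<Rightarrow> real mat" where
  "Pi_mat m d a = mat (m * d) (m choose 2) (\<lambda>(r, p).
      (case pairs_list m ! p of (i, j) \<Rightarrow>
         sqrt (a / real m) * ((if r = i * d then 1 else 0) - (if r = j * d then 1 else 0))))"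

definition PiR_mat :: "nat \<Rightarrow> nat \<Rightarrow> real \<Rightarrow> real mat" where
  "PiR_mat m d a = mat m (m choose 2) (\<lambda>(k, p). Pi_mat m d a $$ (k * d, p))"

definition GR_mat :: "nat \<Rightarrow> nat \<Rightarrow> real \<Rightarrow> real mat" where
  "GR_mat m d c = mat m m (\<lambda>(k, l).
      - (real d / (2 * c * real m)) * \<bar>real k - real l\<bar> * (real m - \<bar>real k - real l\<bar>))"

definition minv :: "real mat \<Rightarrow> real mat" where
  "minv A = the (mat_inverse A)"

definition MR_mat :: "nat \<Rightarrow> nat \<Rightarrow> real \<Rightarrow> real \<Rightarrow> real mat" where
  "MR_mat m d a c = minv (minv (GR_mat m d c) + PiR_mat m d a * transpose_mat (PiR_mat m d a))"

definition F_mat :: "nat \<Rightarrow> nat \<Rightarrow> real \<Rightarrow> real \<Rightarrow> real mat" where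
  "F_mat m d a c =
     (let P = Pi_mat m d a; PR = PiR_mat m d a in
      P * transpose_mat P - P * transpose_mat PR * MR_mat m d a c * PR * transpose_mat P)"

end

theory Submission imports Defs "Jordan_Normal_Form.Determinant" begin

lemma T_mono: "(q::real) > 1 \<Longrightarrow> cheb_T k q \<ge> 1 \<and> cheb_T (Suc k) q > cheb_T k q"
proof (induction k)
  case 0 then show ?case by simp
next
  case (Suc k)
  then have "cheb_T (Suc (Suc k)) q - cheb_T (Suc k) q = (2*q-2) * cheb_T (Suc k) q + (cheb_T (Suc k) q - cheb_T k q)"
    by (simp add: algebra_simps)
  moreover have "(2*q-2) * cheb_T (Suc k) q > 0" using Suc by (simp)
  ultimately show ?case using Suc by linarith
qed

lemma T_gt1: "(q::real) > 1 \<Longrightarrow> m \<ge> 1 \<Longrightarrow> cheb_T m q > 1"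
proof -
  assume q: "q > 1" and m: "m \<ge> 1"
  then obtain k where "m = Suc k" by (cases m) auto
  with T_mono[OF q, of k] show ?thesis by (metis order_le_less_trans)
qed

lemma U_T: "cheb_U (Suc (Suc k)) x - cheb_U k x = 2 * cheb_T (Suc (Suc k)) x"
proof (induction k rule: nat_less_induct)
  case (1 n)
  show ?case
  proof (cases n)
    case 0 then show ?thesis by (simp add: algebra_simps power2_eq_square)
  next
    case (Suc k) note k = this
    show ?thesis
    proof (cases k)
      case 0 then show ?thesis using k by (simp add: algebra_simps power2_eq_square)
    next
      case (Suc j)
      have a: "cheb_U (Suc (Suc j)) x - cheb_U j x = 2 * cheb_T (Suc (Suc j)) x" using 1 k Suc by auto
      have b: "cheb_U (Suc (Suc k)) x - cheb_U k x = 2 * cheb_T (Suc (Suc k)) x" using 1 k Suc by auto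
      have b': "x * cheb_U (Suc (Suc k)) x - x * cheb_U k x = 2 * (x * cheb_T (Suc (Suc k)) x)"
        using arg_cong[OF b, of "\<lambda>t. x * t"] by (simp add: algebra_simps)
      have r1: "cheb_U (Suc (Suc n)) x = 2 * (x * cheb_U (Suc n) x) - cheb_U n x" by simp
      have r2: "cheb_U n x = 2 * (x * cheb_U k x) - cheb_U j x" using k Suc by simp
      have r3: "cheb_T (Suc (Suc n)) x = 2 * (x * cheb_T (Suc n) x) - cheb_T n x" by simp
      show ?thesis using a b' r1 r2 r3 k Suc by simp
    qed
  qed
qed

lemma Uint_rec: "k \<ge> 0 \<Longrightarrow> cheb_U_int (k+1) x = 2 * x * cheb_U_int k x - cheb_U_int (k - 1) x"
proof -
  assume k: "k \<ge> 0"
  then obtain n where n: "k = int n" by (metis nonneg_int_cases)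
  show ?thesis
  proof (cases n)
    case 0 then show ?thesis using n by (simp add: cheb_U_int_def)
  next
    case (Suc j)
    have "nat (k+1) = Suc (Suc j)" "nat k = Suc j" "nat (k - 1) = j" using n Suc by auto
    then show ?thesis using n Suc by (simp add: cheb_U_int_def)
  qed
qed


lemma minv_eq: assumes A: "A \<in> carrier_mat n n" and B: "B \<in> carrier_mat n n"
  and AB: "A * B = 1\<^sub>m n" shows "minv A = B"
proof -
  have BA: "B * A = 1\<^sub>m n" using mat_mult_left_right_inverse[OF A B AB] .
  show ?thesis
  proof (cases "mat_inverse A")
    case None
    from mat_inverse(1)[OF A None, of undefined]
    have "A \<notin> Units (ring_mat TYPE(real) n undefined)" .
    moreover have "A \<in> Units (ring_mat TYPE(real) n undefined)"
      using A B AB BA unfolding Units_def ring_mat_def by auto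
    ultimately show ?thesis by blast
  next
    case (Some C)
    from mat_inverse(2)[OF A Some] have C: "A * C = 1\<^sub>m n" "C * A = 1\<^sub>m n" "C \<in> carrier_mat n n" by auto
    have "C = C * (A * B)" using C(3) AB by simp
    also have "\<dots> = (C * A) * B" using A B C(3) by simp
    also have "\<dots> = B" using C B by simp
    finally show ?thesis unfolding minv_def Some by simp
  qed
qed

lemma mod_pred: "(k::nat) < m \<Longrightarrow> (k + m - 1) mod m = (if k = 0 then m - 1 else k - 1)"
proof -
  assume k: "k < m"
  show ?thesis
  proof (cases "k = 0")
    case True
    have "m - 1 < m" using k by arith
    then show ?thesis using True by simp
  next
    case False
    then have e: "k + m - 1 = (k - 1) + m" by simp
    have "((k - 1) + m) mod m = k - 1" using k by simp
    then show ?thesis using False e by simp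
  qed
qed

lemma mod_succ: "l < m \<Longrightarrow> Suc l mod m = (if Suc l = m then 0 else Suc l)"
  by auto

lemma succ_pred_iff: "l < m \<Longrightarrow> k < m \<Longrightarrow> (k = Suc l mod m) = (l = (k + m - 1) mod m)"
proof -
  assume l: "l < m" and k: "k < m"
  show ?thesis unfolding mod_pred[OF k] mod_succ[OF l] using l k by auto
qed

lemma ite10: "(if P then 1 else 0) * (x::real) = (if P then x else 0)"
  "(x::real) * (if P then 1 else 0) = (if P then x else 0)" by auto

definition Jm :: "nat \<Rightarrow> real mat" where "Jm m = mat m m (\<lambda>_. 1)"
definition Sh :: "nat \<Rightarrow> real mat" where "Sh m = mat m m (\<lambda>(k,l). if l = Suc k mod m then 1 else 0)"

lemma Jm_carrier[simp]: "Jm m \<in> carrier_mat m m" by (simp add: Jm_def)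
lemma Sh_carrier[simp]: "Sh m \<in> carrier_mat m m" by (simp add: Sh_def)
lemma ShT_carrier[simp]: "transpose_mat (Sh m) \<in> carrier_mat m m" by (simp add: Sh_def)

lemma sh_left: assumes A: "A \<in> carrier_mat m nc" and k: "k < m" and j: "j < nc"
  shows "(Sh m * A) $$ (k, j) = A $$ (Suc k mod m, j)"
proof -
  have "(Sh m * A) $$ (k, j) = (\<Sum>l<m. (if l = Suc k mod m then 1 else 0) * A $$ (l, j))"
    using A k j by (simp add: Sh_def scalar_prod_def lessThan_atLeast0)
  also have "\<dots> = A $$ (Suc k mod m, j)"
    using k by (simp only: ite10, simp)
  finally show ?thesis .
qed

lemma shT_left: assumes A: "A \<in> carrier_mat m nc" and k: "k < m" and j: "j < nc"
  shows "(transpose_mat (Sh m) * A) $$ (k, j) = A $$ ((k + m - 1) mod m, j)"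
proof -
  have "(transpose_mat (Sh m) * A) $$ (k, j) = (\<Sum>l<m. (if k = Suc l mod m then 1 else 0) * A $$ (l, j))"
    using A k j by (simp add: Sh_def scalar_prod_def lessThan_atLeast0)
  also have "\<dots> = (\<Sum>l<m. (if l = (k + m - 1) mod m then 1 else 0) * A $$ (l, j))"
    by (rule sum.cong, simp, simp add: succ_pred_iff[OF _ k])
  also have "\<dots> = A $$ ((k + m - 1) mod m, j)"
    using k by (simp only: ite10, simp)
  finally show ?thesis .
qed

lemma sh_right: assumes A: "A \<in> carrier_mat nr m" and k: "k < nr" and j: "j < m"
  shows "(A * Sh m) $$ (k, j) = A $$ (k, (j + m - 1) mod m)"
proof -
  have "(A * Sh m) $$ (k, j) = (\<Sum>l<m. A $$ (k, l) * (if j = Suc l mod m then 1 else 0))"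
    using A k j by (simp add: Sh_def scalar_prod_def lessThan_atLeast0)
  also have "\<dots> = (\<Sum>l<m. A $$ (k, l) * (if l = (j + m - 1) mod m then 1 else 0))"
    by (rule sum.cong, simp, simp add: succ_pred_iff[OF _ j])
  also have "\<dots> = A $$ (k, (j + m - 1) mod m)"
    using j by (simp only: ite10, simp)
  finally show ?thesis .
qed

lemma shT_right: assumes A: "A \<in> carrier_mat nr m" and k: "k < nr" and j: "j < m"
  shows "(A * transpose_mat (Sh m)) $$ (k, j) = A $$ (k, Suc j mod m)"
proof -
  have "(A * transpose_mat (Sh m)) $$ (k, j) = (\<Sum>l<m. A $$ (k, l) * (if l = Suc j mod m then 1 else 0))"
    using A k j by (simp add: Sh_def scalar_prod_def lessThan_atLeast0)
  also have "\<dots> = A $$ (k, Suc j mod m)"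
    using j by (simp only: ite10, simp)
  finally show ?thesis .
qed

lemma sh_J1: "Sh m * Jm m = Jm m"
  by (rule eq_matI, subst sh_left[where A="Jm m"], auto simp: Jm_def Sh_def)
lemma sh_J2: "transpose_mat (Sh m) * Jm m = Jm m"
  by (rule eq_matI, subst shT_left[where A="Jm m"], auto simp: Jm_def Sh_def)
lemma sh_J3: "Jm m * Sh m = Jm m"
  by (rule eq_matI, subst sh_right[where A="Jm m"], auto simp: Jm_def Sh_def)
lemma sh_J4: "Jm m * transpose_mat (Sh m) = Jm m"
  by (rule eq_matI, subst shT_right[where A="Jm m"], auto simp: Jm_def Sh_def)

lemma JJ: "Jm m * Jm m = real m \<cdot>\<^sub>m Jm m"
  by (rule eq_matI) (auto simp: Jm_def scalar_prod_def)



lemma modd: "(k::nat) < m \<Longrightarrow> j < m \<Longrightarrow> (j + m - k) mod m = (if k \<le> j then j - k else j + m - k)"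
proof -
  assume k: "k < m" and j: "j < m"
  show ?thesis
  proof (cases "k \<le> j")
    case True
    then have "j + m - k = (j - k) + m" by simp
    moreover have "j - k < m" using j by simp
    ultimately show ?thesis using True by (metis mod_add_self2 mod_less)
  next
    case False then show ?thesis using k j by simp
  qed
qed

lemma mod2: "(x::nat) < 2*m \<Longrightarrow> x mod m = (if x < m then x else x - m)"
  by (simp add: le_mod_geq)

lemma ar_a: "(k::nat) < m \<Longrightarrow> j < m \<Longrightarrow> (j + m - Suc k mod m) mod m = ((j+m-k) mod m + m - 1) mod m"
  by (cases "k \<le> j"; cases "Suc k = m"; cases "j = 0"; cases "Suc j = m"; cases "k = 0"; auto simp: mod2 split: if_splits)

lemma ar_b: "(k::nat) < m \<Longrightarrow> j < m \<Longrightarrow> (j + m - (k+m-1) mod m) mod m = Suc ((j+m-k) mod m) mod m"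
  by (cases "k \<le> j"; cases "Suc k = m"; cases "j = 0"; cases "Suc j = m"; cases "k = 0"; auto simp: mod2 split: if_splits)

lemma ar_c: "(k::nat) < m \<Longrightarrow> j < m \<Longrightarrow> ((j+m-1) mod m + m - k) mod m = ((j+m-k) mod m + m - 1) mod m"
  by (cases "k \<le> j"; cases "Suc k = m"; cases "j = 0"; cases "Suc j = m"; cases "k = 0"; auto simp: mod2 split: if_splits)

lemma ar_d: "(k::nat) < m \<Longrightarrow> j < m \<Longrightarrow> (Suc j mod m + m - k) mod m = Suc ((j+m-k) mod m) mod m"
  by (cases "k \<le> j"; cases "Suc k = m"; cases "j = 0"; cases "Suc j = m"; cases "k = 0"; auto simp: mod2 split: if_splits)



definition circ :: "nat \<Rightarrow> (nat \<Rightarrow> real) \<Rightarrow> real mat" where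
  "circ m g = mat m m (\<lambda>(k,l). g ((l + m - k) mod m))"

lemma circ_carrier[simp]: "circ m g \<in> carrier_mat m m" by (simp add: circ_def)

lemma circ_idx: "k < m \<Longrightarrow> j < m \<Longrightarrow> circ m g $$ (k,j) = g ((j + m - k) mod m)"
  by (simp add: circ_def)

lemma circ_Sh_left: "k < m \<Longrightarrow> j < m \<Longrightarrow>
  (Sh m * circ m g) $$ (k,j) = g (((j+m-k) mod m + m - 1) mod m)"
  by (subst sh_left[where A="circ m g"], auto simp: circ_idx ar_a)

lemma circ_ShT_left: "k < m \<Longrightarrow> j < m \<Longrightarrow>
  (transpose_mat (Sh m) * circ m g) $$ (k,j) = g (Suc ((j+m-k) mod m) mod m)"
proof -
  assume k: "k < m" and j: "j < m"
  have "(k + m - 1) mod m < m" using k by simp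
  then show ?thesis using k j by (subst shT_left[where A="circ m g"], auto simp: circ_idx ar_b[simplified])
qed

lemma circ_Sh_right: "k < m \<Longrightarrow> j < m \<Longrightarrow>
  (circ m g * Sh m) $$ (k,j) = g (((j+m-k) mod m + m - 1) mod m)"
proof -
  assume k: "k < m" and j: "j < m"
  have "(j + m - 1) mod m < m" using k by simp
  then show ?thesis using k j by (subst sh_right[where A="circ m g"], auto simp: circ_idx ar_c[simplified])
qed

lemma circ_ShT_right: "k < m \<Longrightarrow> j < m \<Longrightarrow>
  (circ m g * transpose_mat (Sh m)) $$ (k,j) = g (Suc ((j+m-k) mod m) mod m)"
  by (subst shT_right[where A="circ m g"], auto simp: circ_idx ar_d)

definition hfun :: "nat \<Rightarrow> nat \<Rightarrow> real" where "hfun m t = real t * (real m - real t)"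

lemma h2: assumes m: "m \<ge> 2" and t: "t < m"
  shows "2 * hfun m t - hfun m ((t+m-1) mod m) - hfun m (Suc t mod m) = 2 - 2 * real m * (if t = 0 then 1 else 0)"
proof -
  consider "t = 0" | "t > 0" "Suc t < m" | "Suc t = m" "t > 0" using t m by linarith
  then show ?thesis
  proof cases
    case 1
    have "(t + m - 1) mod m = m - 1" "Suc t mod m = 1" using 1 m by (auto simp: mod_pred)
    then show ?thesis using 1 m by (simp add: hfun_def of_nat_diff algebra_simps)
  next
    case 2
    have "(t + m - 1) mod m = t - 1" "Suc t mod m = Suc t" using 2 m t mod_pred[of t m] by auto
    then show ?thesis using 2 m by (simp add: hfun_def of_nat_diff algebra_simps)
  next
    case 3
    have "(t + m - 1) mod m = t - 1" "Suc t mod m = 0" using 3 m t mod_pred[of t m] by auto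
    moreover have mt: "real m = real t + 1" using 3 by (metis of_nat_Suc add.commute)
    moreover have "real (t - 1) = real t - 1" using 3 by (simp add: of_nat_diff)
    ultimately show ?thesis using 3 unfolding hfun_def mt by (simp add: algebra_simps)
  qed
qed

definition wl :: "nat \<Rightarrow> real \<Rightarrow> int \<Rightarrow> real" where
  "wl m q t = cheb_U_int (t - 1) q + cheb_U_int (int m - 1 - t) q"

lemma wl_rec: assumes "1 \<le> t" "t \<le> int m - 1"
  shows "2 * q * wl m q t - wl m q (t - 1) - wl m q (t + 1) = 0"
proof -
  have r1: "cheb_U_int ((t - 1) + 1) q = 2 * q * cheb_U_int (t - 1) q - cheb_U_int (t - 1 - 1) q"
    using assms by (intro Uint_rec) simp
  have r2: "cheb_U_int ((int m - 1 - t) + 1) q = 2 * q * cheb_U_int (int m - 1 - t) q - cheb_U_int (int m - 1 - t - 1) q"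
    using assms by (intro Uint_rec) simp
  have e: "(t - 1) + 1 = t" "t - 1 - 1 = t - 2" "(int m - 1 - t) + 1 = int m - 1 - (t - 1)"
     "int m - 1 - t - 1 = int m - 1 - (t + 1)" "t + 1 - 1 = t" by simp_all
  show ?thesis using r1 r2 unfolding wl_def e by (simp add: algebra_simps)
qed

lemma w2: assumes m: "m \<ge> 2" and t: "t < m"
  shows "2 * q * wl m q (int t) - wl m q (int ((t+m-1) mod m)) - wl m q (int (Suc t mod m))
     = (if t = 0 then 2 * (cheb_T m q - 1) else 0)"
proof (cases "t = 0")
  case True
  obtain j where j: "m = Suc (Suc j)" using m by (metis add_2_eq_Suc le_Suc_ex)
  have "(t + m - 1) mod m = Suc j" "Suc t mod m = 1" using True j by (auto simp: mod_pred)
  then have e: "int ((t+m-1) mod m) = int m - 1" "int (Suc t mod m) = 1" "int t = 0" using j True by auto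
  have nj: "nat (1 + int j) = Suc j" by arith
  have u: "cheb_U_int (int m - 1) q = cheb_U (Suc j) q" "cheb_U_int (int m - 2) q = cheb_U j q"
    "cheb_U_int (int m - 1 - 1) q = cheb_U j q" "cheb_U_int (-1) q = 0" "cheb_U_int 0 q = 1"
    "cheb_U_int (0 - 1) q = 0" "cheb_U_int (1 - 1) q = 1" "cheb_U_int (int m - 1 - (int m - 1) - 1) q = 0"
    "cheb_U_int (int m - 1 - (int m - 1)) q = 1" "cheb_U_int (int m - 1 - 0) q = cheb_U (Suc j) q"
    "cheb_U_int (int m - 1 - 1) q = cheb_U j q"
    using j nj by (auto simp: cheb_U_int_def nat_diff_distrib)
  have ut: "cheb_U (Suc (Suc j)) q - cheb_U j q = 2 * cheb_T (Suc (Suc j)) q" by (rule U_T)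
  show ?thesis unfolding e wl_def u using True ut j by (simp add: algebra_simps)
next
  case False
  have "(t + m - 1) mod m = t - 1" using False t mod_pred[of t m] by simp
  then have e1: "int ((t+m-1) mod m) = int t - 1" using False by simp
  have e2: "wl m q (int (Suc t mod m)) = wl m q (int t + 1)"
  proof (cases "Suc t = m")
    case True
    then have "int (Suc t mod m) = 0" by simp
    moreover have "nat (int m - 1) = t" using True by arith
    moreover have "wl m q 0 = wl m q (int t + 1)" using True calculation(2) unfolding wl_def
      by (simp add: cheb_U_int_def)
    ultimately show ?thesis by simp
  next
    case False
    then have "Suc t mod m = Suc t" using t by simp
    then show ?thesis by (simp add: add.commute)
  qed
  show ?thesis unfolding e1 e2 using wl_rec[of "int t" m q] False t by simp
qed



lemma pairs_list_eq: "pairs_list m = concat (map (\<lambda>i. map (\<lambda>j. (i, j)) [Suc i..<m]) [0..<m])"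
  by (simp add: pairs_list_def)

lemma my_sum_list_concat: "sum_list (concat xss) = sum_list (map sum_list (xss :: 'a::monoid_add list list))"
  by (induction xss) auto

lemma sum_pairs: "(\<Sum>p<length (pairs_list m). g (pairs_list m ! p)) = (\<Sum>i<m. \<Sum>j\<in>{Suc i..<m}. g (i, j))"
proof -
  have "(\<Sum>p<length (pairs_list m). g (pairs_list m ! p)) = sum_list (map g (pairs_list m))"
    by (simp add: sum_list_sum_nth lessThan_atLeast0)
  also have "\<dots> = (\<Sum>i<m. \<Sum>j\<in>{Suc i..<m}. g (i, j))"
    unfolding pairs_list_eq
    by (simp add: map_concat my_sum_list_concat o_def sum_set_upt_conv_sum_list_nat[symmetric] lessThan_atLeast0)
  finally show ?thesis .
qed

lemma sucsum: "(\<Sum>i<n. Suc (g i)) = (\<Sum>i<n. g i) + (n::nat)"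
  by (induction n) auto

lemma length_pairs: "length (pairs_list m) = m choose 2"
proof -
  have "length (pairs_list m) = (\<Sum>i<m. \<Sum>j\<in>{Suc i..<m}. (1::nat))"
    using sum_pairs[where m=m and g="\<lambda>_. 1::nat"] by simp
  also have "\<dots> = m choose 2"
  proof (induction m)
    case 0 then show ?case by simp
  next
    case (Suc n)
    have "(\<Sum>i<Suc n. \<Sum>j\<in>{Suc i..<Suc n}. (1::nat)) = (\<Sum>i<n. \<Sum>j\<in>{Suc i..<n}. (1::nat)) + n"
    proof -
      have "(\<Sum>i<Suc n. \<Sum>j\<in>{Suc i..<Suc n}. (1::nat)) = (\<Sum>i<Suc n. Suc n - Suc i)" by simp
      also have "\<dots> = (\<Sum>i<n. Suc n - Suc i)" by simp
      also have "\<dots> = (\<Sum>i<n. (n - Suc i) + 1)" by (rule sum.cong) auto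
      also have "\<dots> = (\<Sum>i<n. \<Sum>j\<in>{Suc i..<n}. (1::nat)) + n" using sucsum[of "\<lambda>i. n - Suc i" n] by simp
      finally show ?thesis .
    qed
    also have "\<dots> = Suc n choose 2" using Suc by (simp add: choose_two) (cases n; simp add: algebra_simps)
    finally show ?case .
  qed
  finally show ?thesis .
qed

lemma pair_sum: assumes k: "k < m" and l: "l < m"
  shows "(\<Sum>i<m. \<Sum>j\<in>{Suc i..<m}. ((if k = i then 1 else 0) - (if k = j then 1 else 0))
      * ((if l = i then 1 else 0) - (if l = j then 1 else 0)) :: real) = (if k = l then real m - 1 else - 1)"
proof (cases "k = l")
  case True
  have "{x. x < m \<and> x < k} = {..<k}" using k by auto
  have "(\<Sum>i<m. \<Sum>j\<in>{Suc i..<m}. ((if k = i then 1 else 0) - (if k = j then 1 else 0))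
      * ((if l = i then 1 else 0) - (if l = j then 1 else 0)) :: real)
    = (\<Sum>i<m. \<Sum>j\<in>{Suc i..<m}. (if i = k then 1 else 0) + (if j = k then 1 else 0))"
    using True by (intro sum.cong refl) auto
  also have "\<dots> = (\<Sum>i<m. (if i = k then real (m - Suc i) else 0) + (if i < k then 1 else 0))"
    using k by (intro sum.cong refl) (auto simp: sum.distrib)
  also have "\<dots> = real (m - Suc k) + real k"
    using k \<open>{x. x < m \<and> x < k} = {..<k}\<close> by (simp add: sum.distrib sum.If_cases lessThan_def Collect_conj_eq[symmetric])
  also have "\<dots> = real m - 1" using k by (simp add: of_nat_diff)
  finally show ?thesis using True by simp
next
  case False
  have "(\<Sum>i<m. \<Sum>j\<in>{Suc i..<m}. ((if k = i then 1 else 0) - (if k = j then 1 else 0))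
      * ((if l = i then 1 else 0) - (if l = j then 1 else 0)) :: real)
    = (\<Sum>i<m. \<Sum>j\<in>{Suc i..<m}. - (if j = l then (if i = k then 1 else 0) else 0) - (if j = k then (if i = l then 1 else 0) else 0))"
    using False by (intro sum.cong refl) auto
  also have "\<dots> = (\<Sum>i<m. - (if i = k then (if k < l then 1 else 0) else 0) - (if i = l then (if l < k then 1 else 0) else 0))"
    using k l by (intro sum.cong refl) (auto simp: sum_subtractf sum_negf)
  also have "\<dots> = - 1"
    using k l False by (auto simp add: sum_subtractf sum_negf)
  finally show ?thesis using False by simp
qed



lemma PR_carrier[simp]: "PiR_mat m d a \<in> carrier_mat m (m choose 2)" by (simp add: PiR_mat_def)
lemma Pi_carrier[simp]: "Pi_mat m d a \<in> carrier_mat (m*d) (m choose 2)" by (simp add: Pi_mat_def)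

lemma PR_dims[simp]: "dim_row (PiR_mat m d a) = m" "dim_col (PiR_mat m d a) = m choose 2"
  by (simp_all add: PiR_mat_def)

lemma PR_idx: assumes "d \<ge> 1" "k < m" "p < m choose 2"
  shows "PiR_mat m d a $$ (k, p) = sqrt (a / real m) *
    ((if k = fst (pairs_list m ! p) then 1 else 0) - (if k = snd (pairs_list m ! p) then 1 else 0))"
proof -
  have kd: "k * d < m * d" using assms by simp
  obtain i j where ij: "pairs_list m ! p = (i, j)" by force
  show ?thesis using assms kd unfolding PiR_mat_def Pi_mat_def by (simp add: ij)
qed

lemma PRPRT: assumes d: "d \<ge> 1" and a: "a \<ge> 0"
  shows "PiR_mat m d a * transpose_mat (PiR_mat m d a) = a \<cdot>\<^sub>m 1\<^sub>m m - (a / real m) \<cdot>\<^sub>m Jm m"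
proof (rule eq_matI)
  fix k l assume k: "k < dim_row (a \<cdot>\<^sub>m 1\<^sub>m m - (a / real m) \<cdot>\<^sub>m Jm m)"
    and l: "l < dim_col (a \<cdot>\<^sub>m 1\<^sub>m m - (a / real m) \<cdot>\<^sub>m Jm m)"
  then have k: "k < m" and l: "l < m" by (auto simp: Jm_def)
  let ?g = "\<lambda>(i,j). ((if k = i then 1 else 0) - (if k = j then 1 else 0))
      * ((if l = i then 1 else 0) - (if l = j then 1 else 0)) :: real"
  have "(PiR_mat m d a * transpose_mat (PiR_mat m d a)) $$ (k, l)
     = (\<Sum>p<m choose 2. PiR_mat m d a $$ (k, p) * PiR_mat m d a $$ (l, p))"
    using k l by (simp add: scalar_prod_def lessThan_atLeast0)
  also have "\<dots> = (\<Sum>p<length (pairs_list m). (a / real m) * ?g (pairs_list m ! p))"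
  proof (rule sum.cong)
    show "{..<m choose 2} = {..<length (pairs_list m)}" by (simp add: length_pairs)
  next
    fix p assume "p \<in> {..<length (pairs_list m)}"
    then have p: "p < m choose 2" by (simp add: length_pairs)
    obtain i j where ij: "pairs_list m ! p = (i, j)" by force
    have s: "sqrt (a / real m) * sqrt (a / real m) = a / real m" using a by simp
    show "PiR_mat m d a $$ (k, p) * PiR_mat m d a $$ (l, p) = (a / real m) * ?g (pairs_list m ! p)"
      unfolding PR_idx[OF d k p] PR_idx[OF d l p] ij using s a
      by (simp add: algebra_simps abs_of_nonneg)
  qed
  also have "\<dots> = (a / real m) * (\<Sum>i<m. \<Sum>j\<in>{Suc i..<m}. ?g (i, j))"
    unfolding sum_distrib_left[symmetric] using sum_pairs[where m=m and g="?g"] by simp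
  also have "\<dots> = (a / real m) * (if k = l then real m - 1 else - 1)"
    using pair_sum[OF k l] by simp
  also have "\<dots> = (a \<cdot>\<^sub>m 1\<^sub>m m - (a / real m) \<cdot>\<^sub>m Jm m) $$ (k, l)"
    using k l by (auto simp: Jm_def field_simps)
  finally show "(PiR_mat m d a * transpose_mat (PiR_mat m d a)) $$ (k, l) = (a \<cdot>\<^sub>m 1\<^sub>m m - (a / real m) \<cdot>\<^sub>m Jm m) $$ (k, l)" .
qed (auto simp: Jm_def)

definition Emb :: "nat \<Rightarrow> nat \<Rightarrow> real mat" where
  "Emb m d = mat (m*d) m (\<lambda>(x,k). if x = k * d then 1 else 0)"

lemma Emb_carrier[simp]: "Emb m d \<in> carrier_mat (m*d) m" by (simp add: Emb_def)

lemma sum_emb: assumes d: "(d::nat) \<ge> 1" and x: "x < m * d"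
  shows "(\<Sum>k<m. (if x = k * d then 1 else 0) * f k) = (if d dvd x then f (x div d) else (0::real))"
proof -
  have "(\<Sum>k<m. (if x = k * d then 1 else 0) * f k) = (\<Sum>k<m. if k = x div d then (if d dvd x then f k else 0) else 0)"
  proof (intro sum.cong refl)
    fix k
    have d0: "d \<noteq> 0" using d by simp
    have key: "(x = k*d) = (d dvd x \<and> k = x div d)" using d0 by (auto simp: dvd_div_mult_self)
    show "(if x = k * d then 1 else 0) * f k = (if k = x div d then (if d dvd x then f k else 0) else 0)"
      unfolding key by auto
  qed
  also have "\<dots> = (if d dvd x then f (x div d) else 0)"
    using x d by (simp add: less_mult_imp_div_less)
  finally show ?thesis .
qed

lemma Emb_left: assumes d: "d \<ge> 1" and A: "A \<in> carrier_mat m nc" and x: "x < m * d" and l: "l < nc"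
  shows "(Emb m d * A) $$ (x, l) = (if d dvd x then A $$ (x div d, l) else 0)"
proof -
  have "(Emb m d * A) $$ (x, l) = (\<Sum>k<m. (if x = k * d then 1 else 0) * A $$ (k, l))"
    using A x l by (simp add: Emb_def scalar_prod_def lessThan_atLeast0)
  then show ?thesis using sum_emb[OF d x] by simp
qed

lemma Emb_right: assumes d: "d \<ge> 1" and A: "A \<in> carrier_mat nr m" and y: "y < m * d" and k: "k < nr"
  shows "(A * transpose_mat (Emb m d)) $$ (k, y) = (if d dvd y then A $$ (k, y div d) else 0)"
proof -
  have "(A * transpose_mat (Emb m d)) $$ (k, y) = (\<Sum>l<m. (if y = l * d then 1 else 0) * A $$ (k, l))"
    using A y k by (simp add: Emb_def scalar_prod_def lessThan_atLeast0 mult.commute)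
  then show ?thesis using sum_emb[OF d y] by simp
qed

lemma Pi_Emb: assumes d: "d \<ge> 1" shows "Pi_mat m d a = Emb m d * PiR_mat m d a"
proof (rule eq_matI)
  fix x p assume "x < dim_row (Emb m d * PiR_mat m d a)" "p < dim_col (Emb m d * PiR_mat m d a)"
  then have x: "x < m * d" and p: "p < m choose 2" by (auto simp: Emb_def PiR_mat_def)
  obtain i j where ij: "pairs_list m ! p = (i, j)" by force
  show "Pi_mat m d a $$ (x, p) = (Emb m d * PiR_mat m d a) $$ (x, p)"
  proof (cases "d dvd x")
    case True
    have xd: "x div d < m" using x d by (simp add: less_mult_imp_div_less)
    have "x div d * d = x" using True by simp
    then show ?thesis using True x p xd unfolding Emb_left[OF d PR_carrier x p]
      by (simp add: PiR_mat_def)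
  next
    case False
    then have "x \<noteq> i * d" "x \<noteq> j * d" by auto
    then show ?thesis using False x p unfolding Emb_left[OF d PR_carrier x p]
      by (simp add: Pi_mat_def ij)
  qed
qed (auto simp: Emb_def Pi_mat_def)



declare minus_carrier_mat[simp]

lemma Sh_dims[simp]: "dim_row (Sh m) = m" "dim_col (Sh m) = m" by (simp_all add: Sh_def)
lemma Jm_dims[simp]: "dim_row (Jm m) = m" "dim_col (Jm m) = m" by (simp_all add: Jm_def)
lemma circ_dims[simp]: "dim_row (circ m g) = m" "dim_col (circ m g) = m" by (simp_all add: circ_def)

lemma modd_zero: "(k::nat) < m \<Longrightarrow> j < m \<Longrightarrow> ((j + m - k) mod m = 0) = (j = k)"
  by (auto simp: modd)

lemma expandL: assumes X: "X \<in> carrier_mat m nc"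
  shows "(x \<cdot>\<^sub>m 1\<^sub>m m - Sh m - transpose_mat (Sh m)) * X = x \<cdot>\<^sub>m X - Sh m * X - transpose_mat (Sh m) * X"
proof -
  have "(x \<cdot>\<^sub>m 1\<^sub>m m - Sh m - transpose_mat (Sh m)) * X = (x \<cdot>\<^sub>m 1\<^sub>m m - Sh m) * X - transpose_mat (Sh m) * X"
    using X by (intro minus_mult_distrib_mat) auto
  also have "(x \<cdot>\<^sub>m 1\<^sub>m m - Sh m) * X = (x \<cdot>\<^sub>m 1\<^sub>m m) * X - Sh m * X"
    using X by (intro minus_mult_distrib_mat) auto
  also have "(x \<cdot>\<^sub>m 1\<^sub>m m) * X = x \<cdot>\<^sub>m X"
    using X by (simp add: mult_smult_assoc_mat[OF one_carrier_mat X])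
  finally show ?thesis .
qed

lemma expandR: assumes X: "X \<in> carrier_mat nr m"
  shows "X * (x \<cdot>\<^sub>m 1\<^sub>m m - Sh m - transpose_mat (Sh m)) = x \<cdot>\<^sub>m X - X * Sh m - X * transpose_mat (Sh m)"
proof -
  have "X * (x \<cdot>\<^sub>m 1\<^sub>m m - Sh m - transpose_mat (Sh m)) = X * (x \<cdot>\<^sub>m 1\<^sub>m m - Sh m) - X * transpose_mat (Sh m)"
    using X by (intro mult_minus_distrib_mat) auto
  also have "X * (x \<cdot>\<^sub>m 1\<^sub>m m - Sh m) = X * (x \<cdot>\<^sub>m 1\<^sub>m m) - X * Sh m"
    using X by (intro mult_minus_distrib_mat) auto
  also have "X * (x \<cdot>\<^sub>m 1\<^sub>m m) = x \<cdot>\<^sub>m X"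
    using X by (simp add: mult_smult_distrib[OF X one_carrier_mat])
  finally show ?thesis .
qed

locale lfx =
  fixes m d :: nat and a c q :: real
  assumes m2: "m \<ge> 2" and d1: "d \<ge> 1" and apos: "a > 0" and cpos: "c > 0"
    and qdef: "q = a * real d / (2 * c) + 1"
begin

abbreviation "I \<equiv> (1\<^sub>m m :: real mat)"
abbreviation "J \<equiv> Jm m"
abbreviation "ShT \<equiv> transpose_mat (Sh m)"

definition "Lc = 2 \<cdot>\<^sub>m I - Sh m - ShT"
definition "Q = (2 * q) \<cdot>\<^sub>m I - Sh m - ShT"
definition "Dn = 2 * (cheb_T m q - 1)"
definition "W = circ m (\<lambda>t. wl m q (int t) / Dn)"
definition "sig = (\<Sum>t<m. hfun m t)"

lemma W_dims[simp]: "dim_row W = m" "dim_col W = m" by (simp_all add: W_def)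

lemma Lc_carrier[simp]: "Lc \<in> carrier_mat m m" by (simp add: Lc_def)
lemma Q_carrier[simp]: "Q \<in> carrier_mat m m" by (simp add: Q_def)
lemma W_carrier[simp]: "W \<in> carrier_mat m m" by (simp add: W_def)
lemma G_carrier[simp]: "GR_mat m d c \<in> carrier_mat m m" by (simp add: GR_mat_def)

lemma q1: "q > 1" using apos cpos d1 by (simp add: qdef)
lemma Dn_pos: "Dn > 0" using T_gt1[OF q1, of m] m2 by (simp add: Dn_def)
lemma mpos: "real m > 0" using m2 by simp

lemma QW: "Q * W = I"
proof (rule eq_matI)
  fix k j assume "k < dim_row I" "j < dim_col I"
  then have k: "k < m" and j: "j < m" by auto
  let ?t = "(j + m - k) mod m"
  have t: "?t < m" using k by simp
  have "(Q * W) $$ (k, j) = (2 * q) * W $$ (k, j) - (Sh m * W) $$ (k, j) - (ShT * W) $$ (k, j)"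
    unfolding Q_def expandL[OF W_carrier] using k j by simp
  also have "\<dots> = (2 * q * wl m q (int ?t) - wl m q (int ((?t + m - 1) mod m)) - wl m q (int (Suc ?t mod m))) / Dn"
    unfolding W_def circ_Sh_left[OF k j] circ_ShT_left[OF k j] circ_idx[OF k j] by (simp add: diff_divide_distrib)
  also have "\<dots> = (if ?t = 0 then 1 else 0)"
    unfolding w2[OF m2 t] using Dn_pos by (simp add: Dn_def)
  also have "\<dots> = I $$ (k, j)" using k j modd_zero[OF k j] by auto
  finally show "(Q * W) $$ (k, j) = I $$ (k, j)" .
qed (auto simp: Q_def W_def)

end


lemma circ_reindex: fixes k m :: nat assumes k: "k < m"
  shows "(\<Sum>l<m. g ((l + m - k) mod m)) = (\<Sum>t<m. (g t :: real))"
proof (rule sum.reindex_bij_witness[where i="\<lambda>t. (t + k) mod m" and j="\<lambda>l. (l + m - k) mod m"])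
  fix l assume l: "l \<in> {..<m}"
  then have l': "l < m" by simp
  have e: "(l + m - k) mod m = (if k \<le> l then l - k else l + m - k)" by (rule modd[OF k l'])
  show "((l + m - k) mod m + k) mod m = l" unfolding e using k l'
    by (cases "k \<le> l") auto
  show "(l + m - k) mod m \<in> {..<m}" using k by simp
next
  fix t assume t: "t \<in> {..<m}"
  then show "((t + k) mod m + m - k) mod m = t" using k
    by (cases "t + k < m") (auto simp: mod2)
  show "(t + k) mod m \<in> {..<m}" using k by simp
qed simp

lemma bil: assumes "A1 \<in> carrier_mat n n" "A2 \<in> carrier_mat n n" "B1 \<in> carrier_mat n n" "B2 \<in> carrier_mat n n"
  shows "(x \<cdot>\<^sub>m A1 + y \<cdot>\<^sub>m A2) * (u \<cdot>\<^sub>m B1 + v \<cdot>\<^sub>m B2) =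
    (x*u) \<cdot>\<^sub>m (A1*B1) + (x*v) \<cdot>\<^sub>m (A1*B2) + (y*u) \<cdot>\<^sub>m (A2*B1) + ((y*v)::real) \<cdot>\<^sub>m (A2*B2)"
  using assms
  by (intro eq_matI) (auto simp: scalar_prod_def sum.distrib sum_distrib_left algebra_simps)

context lfx begin

definition "G = GR_mat m d c"

lemma G_circ: "G = circ m (\<lambda>t. - (real d / (2 * c * real m)) * hfun m t)"
proof (rule eq_matI)
  fix k l assume "k < dim_row (circ m (\<lambda>t. - (real d / (2 * c * real m)) * hfun m t))"
    "l < dim_col (circ m (\<lambda>t. - (real d / (2 * c * real m)) * hfun m t))"
  then have k: "k < m" and l: "l < m" by auto
  show "G $$ (k, l) = circ m (\<lambda>t. - (real d / (2 * c * real m)) * hfun m t) $$ (k, l)"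
    unfolding circ_idx[OF k l] G_def GR_mat_def using k l
    by (cases "k \<le> l") (auto simp: modd hfun_def of_nat_diff)
qed (auto simp: G_def GR_mat_def)

lemma G_carr[simp]: "G \<in> carrier_mat m m" by (simp add: G_def)
lemma G_dims[simp]: "dim_row G = m" "dim_col G = m" by (simp_all add: G_def GR_mat_def)

lemma GLc: "G * Lc = (real d / c) \<cdot>\<^sub>m (I - (1 / real m) \<cdot>\<^sub>m J)"
proof (rule eq_matI)
  fix k j assume "k < dim_row ((real d / c) \<cdot>\<^sub>m (I - (1 / real m) \<cdot>\<^sub>m J))"
     "j < dim_col ((real d / c) \<cdot>\<^sub>m (I - (1 / real m) \<cdot>\<^sub>m J))"
  then have k: "k < m" and j: "j < m" by auto
  let ?t = "(j + m - k) mod m"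
  have t: "?t < m" using k by simp
  have "(G * Lc) $$ (k, j) = 2 * G $$ (k, j) - (G * Sh m) $$ (k, j) - (G * ShT) $$ (k, j)"
    unfolding Lc_def expandR[OF G_carr] using k j by simp
  also have "\<dots> = - (real d / (2 * c * real m)) * (2 * hfun m ?t - hfun m ((?t + m - 1) mod m) - hfun m (Suc ?t mod m))"
    unfolding G_circ circ_Sh_right[OF k j] circ_ShT_right[OF k j] circ_idx[OF k j] by (simp add: algebra_simps)
  also have "\<dots> = - (real d / (2 * c * real m)) * (2 - 2 * real m * (if ?t = 0 then 1 else 0))"
    unfolding h2[OF m2 t] ..
  also have "\<dots> = ((real d / c) \<cdot>\<^sub>m (I - (1 / real m) \<cdot>\<^sub>m J)) $$ (k, j)"
    using k j modd_zero[OF k j] mpos cpos by (auto simp: Jm_def field_simps)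
  finally show "(G * Lc) $$ (k, j) = ((real d / c) \<cdot>\<^sub>m (I - (1 / real m) \<cdot>\<^sub>m J)) $$ (k, j)" .
qed (auto simp: G_def GR_mat_def Lc_def)

lemma GJ: "G * J = (- (real d / (2 * c * real m)) * sig) \<cdot>\<^sub>m J"
proof (rule eq_matI)
  fix k j assume "k < dim_row ((- (real d / (2 * c * real m)) * sig) \<cdot>\<^sub>m J)"
     "j < dim_col ((- (real d / (2 * c * real m)) * sig) \<cdot>\<^sub>m J)"
  then have k: "k < m" and j: "j < m" by auto
  have "(G * J) $$ (k, j) = (\<Sum>l<m. - (real d / (2 * c * real m)) * hfun m ((l + m - k) mod m))"
    unfolding G_circ using k j by (simp add: circ_def Jm_def scalar_prod_def lessThan_atLeast0)
  also have "\<dots> = (\<Sum>t<m. - (real d / (2 * c * real m)) * hfun m t)"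
    by (rule circ_reindex[OF k])
  also have "\<dots> = ((- (real d / (2 * c * real m)) * sig) \<cdot>\<^sub>m J) $$ (k, j)"
    using k j by (simp add: sig_def Jm_def sum_distrib_left)
  finally show "(G * J) $$ (k, j) = ((- (real d / (2 * c * real m)) * sig) \<cdot>\<^sub>m J) $$ (k, j)" .
qed (auto simp: G_def GR_mat_def)

lemma QJ: "Q * J = (2 * q - 2) \<cdot>\<^sub>m J"
  unfolding Q_def expandL[OF Jm_carrier] sh_J1 sh_J2
  by (rule eq_matI) (auto simp: Jm_def)

lemma JQ: "J * Q = (2 * q - 2) \<cdot>\<^sub>m J"
  unfolding Q_def expandR[OF Jm_carrier] sh_J3 sh_J4
  by (rule eq_matI) (auto simp: Jm_def)

lemma JLc: "Lc * J = 0\<^sub>m m m"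
  unfolding Lc_def expandL[OF Jm_carrier] sh_J1 sh_J2
  by (rule eq_matI) (auto simp: Jm_def)

lemma sig_pos: "sig > 0"
proof -
  have "hfun m 1 > 0" using m2 by (simp add: hfun_def)
  moreover have "\<forall>t\<in>{..<m}. hfun m t \<ge> 0" by (auto simp: hfun_def)
  moreover have "1 \<in> {..<m}" using m2 by simp
  ultimately have "hfun m 1 \<le> sig" unfolding sig_def by (intro member_le_sum) auto
  then show ?thesis using \<open>hfun m 1 > 0\<close> by simp
qed

end


context lfx begin

definition "s = a / real m"
definition "bet' = 2 * c / (real d * sig)"
definition "bet = bet' + s"
definition "gam = bet / (a * (a - bet * real m))"
definition "Gi = (c / real d) \<cdot>\<^sub>m Lc + (- bet') \<cdot>\<^sub>m J"
definition "K = (c / real d) \<cdot>\<^sub>m Q + (- bet) \<cdot>\<^sub>m J"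
definition "M' = (real d / c) \<cdot>\<^sub>m W + gam \<cdot>\<^sub>m J"

lemma Gi_carr[simp]: "Gi \<in> carrier_mat m m" by (simp add: Gi_def)
lemma K_carr[simp]: "K \<in> carrier_mat m m" by (simp add: K_def)
lemma M'_carr[simp]: "M' \<in> carrier_mat m m" by (simp add: M'_def)

lemma dpos: "real d > 0" using d1 by simp
lemma sm: "s * real m = a" using mpos by (simp add: s_def)
lemma e1: "(c / real d) * (2 * q - 2) = a" using dpos cpos by (simp add: qdef field_simps)
lemma e2: "(real d / c) / (2 * q - 2) = 1 / a" using dpos cpos apos by (simp add: qdef field_simps)
lemma q22: "2 * q - 2 > 0" using q1 by simp
lemma betp_pos: "bet' > 0" using sig_pos cpos dpos by (simp add: bet'_def)
lemma den: "a - bet * real m \<noteq> 0"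
proof -
  have "a - bet * real m = - bet' * real m" using sm by (simp add: bet_def algebra_simps)
  then show ?thesis using betp_pos mpos by simp
qed
lemma e3: "gam * (a - bet * real m) = bet / a" using den apos by (simp add: gam_def)

lemma GGi: "G * Gi = I"
proof -
  have "G * Gi = G * ((c / real d) \<cdot>\<^sub>m Lc) + G * ((- bet') \<cdot>\<^sub>m J)"
    unfolding Gi_def by (rule mult_add_distrib_mat) auto
  also have "\<dots> = (c / real d) \<cdot>\<^sub>m (G * Lc) + (- bet') \<cdot>\<^sub>m (G * J)"
    by (simp add: mult_smult_distrib[of _ m m _ m])
  also have "\<dots> = I" unfolding GLc GJ
  proof (rule eq_matI)
    fix k j assume "k < dim_row I" "j < dim_col I"
    then have k: "k < m" and j: "j < m" by auto
    have b: "bet' * (real d / (2 * c * real m) * sig) = 1 / real m"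
      using sig_pos cpos dpos mpos by (simp add: bet'_def field_simps)
    show "((c / real d) \<cdot>\<^sub>m ((real d / c) \<cdot>\<^sub>m (I - (1 / real m) \<cdot>\<^sub>m J)) +
          (- bet') \<cdot>\<^sub>m ((- (real d / (2 * c * real m)) * sig) \<cdot>\<^sub>m J)) $$ (k, j) = I $$ (k, j)"
      using k j b cpos dpos betp_pos sig_pos by (simp add: Jm_def field_simps)
  qed auto
  finally show ?thesis .
qed

lemma minvG: "minv G = Gi" by (rule minv_eq[OF G_carr Gi_carr GGi])

lemma WQ: "W * Q = I" by (rule mat_mult_left_right_inverse[OF Q_carrier W_carrier QW])

lemma JW: "J * W = (1 / (2 * q - 2)) \<cdot>\<^sub>m J"
proof -
  have "J = J * (Q * W)" unfolding QW by simp
  also have "\<dots> = (J * Q) * W" by (simp add: assoc_mult_mat[of J m m Q m W m])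
  also have "\<dots> = (2 * q - 2) \<cdot>\<^sub>m (J * W)" unfolding JQ by (simp add: mult_smult_assoc_mat[of J m m W m])
  finally have eq: "J = (2 * q - 2) \<cdot>\<^sub>m (J * W)" .
  show ?thesis
  proof (rule eq_matI)
    fix k j assume "k < dim_row ((1 / (2 * q - 2)) \<cdot>\<^sub>m J)" "j < dim_col ((1 / (2 * q - 2)) \<cdot>\<^sub>m J)"
    then have k: "k < m" and j: "j < m" by auto
    have "J $$ (k, j) = (2 * q - 2) * (J * W) $$ (k, j)"
      using arg_cong[OF eq, of "\<lambda>M. M $$ (k, j)"] k j by simp
    then show "(J * W) $$ (k, j) = ((1 / (2 * q - 2)) \<cdot>\<^sub>m J) $$ (k, j)"
      using k j q22 by (simp add: field_simps)
  qed auto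
qed

lemma WJ: "W * J = (1 / (2 * q - 2)) \<cdot>\<^sub>m J"
proof -
  have "J = (W * Q) * J" unfolding WQ by simp
  also have "\<dots> = W * (Q * J)" by (simp add: assoc_mult_mat[of W m m Q m J m])
  also have "\<dots> = (2 * q - 2) \<cdot>\<^sub>m (W * J)" unfolding QJ by (simp add: mult_smult_distrib[of W m m J m])
  finally have eq: "J = (2 * q - 2) \<cdot>\<^sub>m (W * J)" .
  show ?thesis
  proof (rule eq_matI)
    fix k j assume "k < dim_row ((1 / (2 * q - 2)) \<cdot>\<^sub>m J)" "j < dim_col ((1 / (2 * q - 2)) \<cdot>\<^sub>m J)"
    then have k: "k < m" and j: "j < m" by auto
    have "J $$ (k, j) = (2 * q - 2) * (W * J) $$ (k, j)"
      using arg_cong[OF eq, of "\<lambda>M. M $$ (k, j)"] k j by simp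
    then show "(W * J) $$ (k, j) = ((1 / (2 * q - 2)) \<cdot>\<^sub>m J) $$ (k, j)"
      using k j q22 by (simp add: field_simps)
  qed auto
qed

lemma KM: "K * M' = I"
proof -
  have "K * M' = ((c / real d) * (real d / c)) \<cdot>\<^sub>m (Q * W) + ((c / real d) * gam) \<cdot>\<^sub>m (Q * J)
     + ((- bet) * (real d / c)) \<cdot>\<^sub>m (J * W) + ((- bet) * gam) \<cdot>\<^sub>m (J * J)"
    unfolding K_def M'_def by (rule bil) auto
  also have "\<dots> = I" unfolding QW QJ JW JJ
  proof (rule eq_matI)
    fix k j assume "k < dim_row I" "j < dim_col I"
    then have k: "k < m" and j: "j < m" by auto
    have sc: "(c / real d * gam) * (2 * q - 2) + (- bet * (real d / c)) * (1 / (2 * q - 2))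
        + (- bet * gam) * real m = 0"
    proof -
      have "(c / real d * gam) * (2 * q - 2) = gam * ((c / real d) * (2 * q - 2))" by (simp only: mult_ac)
      then have "(c / real d * gam) * (2 * q - 2) = gam * a" by (simp only: e1)
      moreover have "(- bet * (real d / c)) * (1 / (2 * q - 2)) = - bet * ((real d / c) / (2 * q - 2))"
        by simp
      then have "(- bet * (real d / c)) * (1 / (2 * q - 2)) = - bet / a" by (simp only: e2) simp
      ultimately show ?thesis using e3 by (simp add: algebra_simps)
    qed
    have cd: "c / real d * (real d / c) = 1" using cpos dpos by simp
    show "((c / real d * (real d / c)) \<cdot>\<^sub>m I + (c / real d * gam) \<cdot>\<^sub>m ((2 * q - 2) \<cdot>\<^sub>m J) +
          (- bet * (real d / c)) \<cdot>\<^sub>m ((1 / (2 * q - 2)) \<cdot>\<^sub>m J) + (- bet * gam) \<cdot>\<^sub>m (real m \<cdot>\<^sub>m J)) $$ (k, j) =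
         I $$ (k, j)"
      using k j sc cd by (simp add: Jm_def algebra_simps)
  qed auto
  finally show ?thesis .
qed

lemma minvK: "minv K = M'" by (rule minv_eq[OF K_carr M'_carr KM])

end


context lfx begin

definition "R = PiR_mat m d a"
definition "RR = R * transpose_mat R"

lemma R_carr[simp]: "R \<in> carrier_mat m (m choose 2)" by (simp add: R_def)
lemma RR_carr[simp]: "RR \<in> carrier_mat m m" by (simp add: RR_def mult_carrier_mat[OF R_carr])
lemma K_dims[simp]: "dim_row K = m" "dim_col K = m" using K_carr[unfolded carrier_mat_def] by auto
lemma Emb_dims[simp]: "dim_row (Emb m d) = m * d" "dim_col (Emb m d) = m" by (simp_all add: Emb_def)

lemma RR_form: "RR = a \<cdot>\<^sub>m I + (- s) \<cdot>\<^sub>m J"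
  unfolding RR_def R_def PRPRT[OF d1 less_imp_le[OF apos]] s_def
  by (rule eq_matI) (auto simp: Jm_def)

lemma MR_eq: "MR_mat m d a c = M'"
proof -
  have "minv (GR_mat m d c) + PiR_mat m d a * transpose_mat (PiR_mat m d a) = K"
    unfolding minvG[unfolded G_def] RR_form[unfolded RR_def R_def]
  proof (rule eq_matI)
    fix k j assume "k < dim_row K" "j < dim_col K"
    then have k: "k < m" and j: "j < m" by auto
    show "(Gi + (a \<cdot>\<^sub>m I + (- s) \<cdot>\<^sub>m J)) $$ (k, j) = K $$ (k, j)"
      using k j e1 unfolding Gi_def K_def Lc_def Q_def bet_def
      by (simp add: Jm_def algebra_simps)
  qed (auto simp: K_def)
  then show ?thesis unfolding MR_mat_def using minvK by simp
qed

lemma P1: "RR * M' = (a * real d / c) \<cdot>\<^sub>m W + (- s / a) \<cdot>\<^sub>m J"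
proof -
  have "RR * M' = (a * (real d / c)) \<cdot>\<^sub>m (I * W) + (a * gam) \<cdot>\<^sub>m (I * J)
     + ((- s) * (real d / c)) \<cdot>\<^sub>m (J * W) + ((- s) * gam) \<cdot>\<^sub>m (J * J)"
    unfolding RR_form M'_def by (rule bil) auto
  also have "\<dots> = (a * real d / c) \<cdot>\<^sub>m W + (- s / a) \<cdot>\<^sub>m J" unfolding JW JJ
  proof (rule eq_matI)
    fix k j assume "k < dim_row ((a * real d / c) \<cdot>\<^sub>m W + (- s / a) \<cdot>\<^sub>m J)"
      "j < dim_col ((a * real d / c) \<cdot>\<^sub>m W + (- s / a) \<cdot>\<^sub>m J)"
    then have k: "k < m" and j: "j < m" by auto
    have sc: "a * gam + (- s * (real d / c)) * (1 / (2 * q - 2)) + (- s * gam) * real m = - s / a"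
    proof -
      have "(- s * (real d / c)) * (1 / (2 * q - 2)) = - s * ((real d / c) / (2 * q - 2))" by simp
      then have "(- s * (real d / c)) * (1 / (2 * q - 2)) = - s / a" by (simp only: e2) simp
      moreover have "a * gam + (- s * gam) * real m = gam * (a - s * real m)" by (simp add: algebra_simps)
      ultimately show ?thesis using sm by simp
    qed
    show "((a * (real d / c)) \<cdot>\<^sub>m (I * W) + (a * gam) \<cdot>\<^sub>m (I * J) + (- s * (real d / c)) \<cdot>\<^sub>m ((1 / (2 * q - 2)) \<cdot>\<^sub>m J) +
          (- s * gam) \<cdot>\<^sub>m (real m \<cdot>\<^sub>m J)) $$ (k, j) = ((a * real d / c) \<cdot>\<^sub>m W + (- s / a) \<cdot>\<^sub>m J) $$ (k, j)"
      using k j sc by (simp add: Jm_def algebra_simps)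
  qed auto
  finally show ?thesis .
qed

lemma P2: "((a * real d / c) \<cdot>\<^sub>m W + (- s / a) \<cdot>\<^sub>m J) * RR = (a * a * real d / c) \<cdot>\<^sub>m W + (- s) \<cdot>\<^sub>m J"
proof -
  have "((a * real d / c) \<cdot>\<^sub>m W + (- s / a) \<cdot>\<^sub>m J) * RR = ((a * real d / c) * a) \<cdot>\<^sub>m (W * I) + ((a * real d / c) * (- s)) \<cdot>\<^sub>m (W * J)
     + ((- s / a) * a) \<cdot>\<^sub>m (J * I) + ((- s / a) * (- s)) \<cdot>\<^sub>m (J * J)"
    unfolding RR_form by (rule bil) auto
  also have "\<dots> = (a * a * real d / c) \<cdot>\<^sub>m W + (- s) \<cdot>\<^sub>m J" unfolding WJ JJ
  proof (rule eq_matI)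
    fix k j assume "k < dim_row ((a * a * real d / c) \<cdot>\<^sub>m W + (- s) \<cdot>\<^sub>m J)"
      "j < dim_col ((a * a * real d / c) \<cdot>\<^sub>m W + (- s) \<cdot>\<^sub>m J)"
    then have k: "k < m" and j: "j < m" by auto
    have sc: "((a * real d / c) * (- s)) * (1 / (2 * q - 2)) + ((- s / a) * a) + ((- s / a) * (- s)) * real m = - s"
    proof -
      have "((a * real d / c) * (- s)) * (1 / (2 * q - 2)) = - s * a * ((real d / c) / (2 * q - 2))" by simp
      then have "((a * real d / c) * (- s)) * (1 / (2 * q - 2)) = - s" using apos by (simp only: e2) simp
      moreover have "((- s / a) * (- s)) * real m = s * (s * real m) / a" by simp
      ultimately show ?thesis using sm apos by simp
    qed
    show "((a * real d / c * a) \<cdot>\<^sub>m (W * I) + (a * real d / c * - s) \<cdot>\<^sub>m ((1 / (2 * q - 2)) \<cdot>\<^sub>m J) +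
          (- s / a * a) \<cdot>\<^sub>m (J * I) + (- s / a * - s) \<cdot>\<^sub>m (real m \<cdot>\<^sub>m J)) $$ (k, j) =
         ((a * a * real d / c) \<cdot>\<^sub>m W + (- s) \<cdot>\<^sub>m J) $$ (k, j)"
      using k j sc by (simp add: Jm_def algebra_simps)
  qed auto
  finally show ?thesis .
qed

lemma X_form: "RR - RR * M' * RR = a \<cdot>\<^sub>m I + (- (a * a * real d / c)) \<cdot>\<^sub>m W"
proof -
  have "RR * M' * RR = (a * a * real d / c) \<cdot>\<^sub>m W + (- s) \<cdot>\<^sub>m J" unfolding P1 P2 ..
  then show ?thesis unfolding RR_form
    by (intro eq_matI) (auto simp: Jm_def)
qed

lemma F_form: "F_mat m d a c = Emb m d * ((RR - RR * M' * RR) * transpose_mat (Emb m d))"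
proof -
  have P: "Pi_mat m d a = Emb m d * R" unfolding R_def by (rule Pi_Emb[OF d1])
  have PT: "transpose_mat (Pi_mat m d a) = transpose_mat R * transpose_mat (Emb m d)"
    unfolding P by (rule transpose_mult[OF Emb_carrier R_carr])
  let ?E = "Emb m d" and ?Et = "transpose_mat (Emb m d)" and ?Rt = "transpose_mat R"
  let ?n = "m * d" and ?N = "m choose 2"
  have Et: "?Et \<in> carrier_mat m ?n" by simp
  have Rt: "?Rt \<in> carrier_mat ?N m" by simp
  have E: "?E \<in> carrier_mat ?n m" by simp
  have A: "R * ?Rt \<in> carrier_mat m m" by (rule mult_carrier_mat[OF R_carr Rt])
  have AM: "R * ?Rt * M' \<in> carrier_mat m m" by (rule mult_carrier_mat[OF A M'_carr])
  have B: "R * ?Rt * M' * R \<in> carrier_mat m ?N" by (rule mult_carrier_mat[OF AM R_carr])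
  have RtEt: "?Rt * ?Et \<in> carrier_mat ?N ?n" by (rule mult_carrier_mat[OF Rt Et])
  have l1: "?E * R * (?Rt * ?Et) = ?E * ((R * ?Rt) * ?Et)"
  proof -
    have "?E * R * (?Rt * ?Et) = ?E * (R * (?Rt * ?Et))" by (rule assoc_mult_mat[OF E R_carr RtEt])
    also have "R * (?Rt * ?Et) = (R * ?Rt) * ?Et" by (rule assoc_mult_mat[OF R_carr Rt Et, symmetric])
    finally show ?thesis .
  qed
  have l2: "?E * R * ?Rt * M' * R * (?Rt * ?Et) = ?E * ((R * ?Rt * M' * (R * ?Rt)) * ?Et)"
  proof -
    have "?E * R * ?Rt = ?E * (R * ?Rt)" by (rule assoc_mult_mat[OF E R_carr Rt])
    then have "?E * R * ?Rt * M' * R * (?Rt * ?Et) = ?E * (R * ?Rt) * M' * R * (?Rt * ?Et)" by simp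
    also have "?E * (R * ?Rt) * M' = ?E * (R * ?Rt * M')" by (rule assoc_mult_mat[OF E A M'_carr])
    also have "?E * (R * ?Rt * M') * R = ?E * (R * ?Rt * M' * R)" by (rule assoc_mult_mat[OF E AM R_carr])
    also have "?E * (R * ?Rt * M' * R) * (?Rt * ?Et) = ?E * (R * ?Rt * M' * R * (?Rt * ?Et))"
      by (rule assoc_mult_mat[OF E B RtEt])
    also have "R * ?Rt * M' * R * (?Rt * ?Et) = (R * ?Rt * M' * R * ?Rt) * ?Et"
      by (rule assoc_mult_mat[OF B Rt Et, symmetric])
    also have "R * ?Rt * M' * R * ?Rt = R * ?Rt * M' * (R * ?Rt)"
      by (rule assoc_mult_mat[OF AM R_carr Rt])
    finally show ?thesis .
  qed
  have l3: "?E * ((R * ?Rt - R * ?Rt * M' * (R * ?Rt)) * ?Et)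
      = ?E * ((R * ?Rt) * ?Et) - ?E * ((R * ?Rt * M' * (R * ?Rt)) * ?Et)"
  proof -
    have C: "R * ?Rt * M' * (R * ?Rt) \<in> carrier_mat m m" by (rule mult_carrier_mat[OF AM A])
    have "(R * ?Rt - R * ?Rt * M' * (R * ?Rt)) * ?Et = (R * ?Rt) * ?Et - (R * ?Rt * M' * (R * ?Rt)) * ?Et"
      by (rule minus_mult_distrib_mat[OF A C Et])
    then show ?thesis
      using mult_minus_distrib_mat[OF E mult_carrier_mat[OF A Et] mult_carrier_mat[OF C Et]] by simp
  qed
  show ?thesis
    unfolding F_mat_def Let_def MR_eq PT R_def[symmetric] RR_def
    unfolding P l1 l2 l3 ..
qed

end


context lfx begin

definition "Xm = a \<cdot>\<^sub>m I + (- (a * a * real d / c)) \<cdot>\<^sub>m W"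
lemma Xm_carr[simp]: "Xm \<in> carrier_mat m m" by (simp add: Xm_def)

lemma F_Xm: "F_mat m d a c = Emb m d * (Xm * transpose_mat (Emb m d))"
  unfolding F_form X_form Xm_def ..

lemma F_carr: "F_mat m d a c \<in> carrier_mat (m * d) (m * d)"
  unfolding F_Xm by (rule mult_carrier_mat[OF Emb_carrier mult_carrier_mat[OF Xm_carr]]) simp

lemma F_entry: assumes x: "x < m * d" and y: "y < m * d"
  shows "F_mat m d a c $$ (x, y) = (if d dvd x \<and> d dvd y then Xm $$ (x div d, y div d) else 0)"
proof -
  have XE: "Xm * transpose_mat (Emb m d) \<in> carrier_mat m (m * d)"
    by (rule mult_carrier_mat[OF Xm_carr]) simp
  have xd: "x div d < m" using x d1 by (simp add: less_mult_imp_div_less)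
  show ?thesis unfolding F_Xm Emb_left[OF d1 XE x y] using Emb_right[OF d1 Xm_carr y xd] by simp
qed

lemma Xm_entry: assumes k: "k < m" and l: "l < m"
  shows "Xm $$ (k, l) = (if (l + m - k) mod m = 0 then a else 0)
     - a * a * real d / c * (wl m q (int ((l + m - k) mod m)) / Dn)"
  unfolding Xm_def W_def using k l modd_zero[OF k l] by (simp add: circ_idx)

end

lemma tlemma: assumes "r \<in> {1..m}" "s \<in> {1..m}"
  shows "nat ((int s - int r) mod int m) = (s - 1 + m - (r - 1)) mod m"
proof -
  have "int ((s - 1 + m - (r - 1)) mod m) = int (s - 1 + m - (r - 1)) mod int m" by (simp add: of_nat_mod)
  also have "int (s - 1 + m - (r - 1)) = (int s - int r) + int m" using assms by (simp add: of_nat_diff)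
  also have "((int s - int r) + int m) mod int m = (int s - int r) mod int m" by simp
  finally show ?thesis by (metis nat_int)
qed

theorem lemma4p3:
  fixes m d :: nat and a c q :: real and f :: "nat \<Rightarrow> real"
  assumes "m \<ge> 2" and "d \<ge> 1" and "a > 0" and "c > 0"
    and "q = a * real d / (2 * c) + 1"
    and "\<And>i. f i = (if i = 1 then a else 0)
             - a\<^sup>2 * real d / (2 * c) *
               (cheb_U_int (int i - 2) q + cheb_U_int (int m - int i) q) / (cheb_T m q - 1)"
  shows "F_mat m d a c \<in> carrier_mat (m * d) (m * d)
    \<and> (\<forall>r \<in> {1..m}. \<forall>s \<in> {1..m}.
          F_mat m d a c $$ ((r - 1) * d, (s - 1) * d)
            = f (nat ((int s - int r) mod int m) + 1))
    \<and> (\<forall>i < m * d. \<forall>j < m * d. \<not> (d dvd i \<and> d dvd j) \<longrightarrow> F_mat m d a c $$ (i, j) = 0)"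
proof -
  interpret lfx m d a c q using assms by unfold_locales auto
  have P1: "F_mat m d a c \<in> carrier_mat (m * d) (m * d)" by (rule F_carr)
  have P3: "\<forall>i < m * d. \<forall>j < m * d. \<not> (d dvd i \<and> d dvd j) \<longrightarrow> F_mat m d a c $$ (i, j) = 0"
    using F_entry by auto
  have P2: "\<forall>r \<in> {1..m}. \<forall>s \<in> {1..m}.
          F_mat m d a c $$ ((r - 1) * d, (s - 1) * d) = f (nat ((int s - int r) mod int m) + 1)"
  proof (intro ballI)
    fix r s assume r: "r \<in> {1..m}" and s: "s \<in> {1..m}"
    let ?k = "r - 1" and ?l = "s - 1"
    have k: "?k < m" and l: "?l < m" using r s by auto
    let ?t = "(?l + m - ?k) mod m"
    have x: "?k * d < m * d" and y: "?l * d < m * d" using k l d1 by auto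
    have dk: "?k * d div d = ?k" "?l * d div d = ?l" using d1 by auto
    have "F_mat m d a c $$ (?k * d, ?l * d) = Xm $$ (?k, ?l)"
      unfolding F_entry[OF x y] dk by simp
    also have "\<dots> = (if ?t = 0 then a else 0) - a * a * real d / c * (wl m q (int ?t) / Dn)"
      by (rule Xm_entry[OF k l])
    also have "\<dots> = f (?t + 1)"
    proof -
      have i1: "int (?t + 1) - 2 = int ?t - 1" "int m - int (?t + 1) = int m - 1 - int ?t" by simp_all
      have T1: "cheb_T m q - 1 > 0" using Dn_pos by (simp add: Dn_def)
      show ?thesis unfolding assms(6)[of "?t + 1"] i1 wl_def Dn_def using T1 cpos
        by (simp add: power2_eq_square field_simps)
    qed
    also have "?t = nat ((int s - int r) mod int m)" using tlemma[OF r s] by simp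
    finally show "F_mat m d a c $$ ((r - 1) * d, (s - 1) * d) = f (nat ((int s - int r) mod int m) + 1)" .
  qed
  show ?thesis using P1 P2 P3 by blast
qed


end
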